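(* Assume that for every periodic sequence $X$ of positive reals with some period $L$, and every $c\in[0,1]$, the limit $F_X(c):=\lim_{k\to\infty}F_X(k,c)$ exists and $c\mapsto F_X(c)$ is continuous on $[0,1]$. Then for every $M\in\mathbb{R}$ there exist $c>0$ and an integer $d>1$ such that $F_{X_d}(c)>M$.
   Context: For a sequence $X=(x_i)$ of positive reals and $1\le k\le n$, $S(X,n,k):=\binom{n}{k}^{-1}\sum_{1\le i_1<\cdots<i_k\le n}x_{i_1}\cdots x_{i_k}$. For $X$ periodic with period $L$: $F_X(k,c):=S(X,kL,\lceil ckL\rceil)^{1/\lceil ckL\rceil}$ for $c\in(0,1]$ and $F_X(k,0):=(x_1+\cdots+x_L)/L$. Let $P_{GK}(k)=\log_2\left(1+\frac{1}{k(k+2)}\right)$. For an integer $d>1$, $X_d$ is the periodic sequence of period $10d^2$ whose first $10d^2$ entries consist, for each $k\in\{2,\ldots,d\}$, of exactly $\lfloor P_{GK}(k)\cdot 10d^2\rfloor$ entries equal to $k$, with all remaining entries equal to $1$ (in any order; $F_{X_d}(k,c)$ does not depend on the order). *)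

theory Defs
  imports "HOL-Analysis.Analysis"
begin

text \<open>Sequences are indexed from 1: X 1, X 2, ... (the value X 0 is irrelevant).\<close>

definition S :: "(nat \<Rightarrow> real) \<Rightarrow> nat \<Rightarrow> nat \<Rightarrow> real" where
  "S X n k = (\<Sum>I\<in>{I. I \<subseteq> {1..n} \<and> card I = k}. \<Prod>i\<in>I. X i) / real (n choose k)"

definition periodic_pos :: "(nat \<Rightarrow> real) \<Rightarrow> nat \<Rightarrow> bool" where
  "periodic_pos X L \<longleftrightarrow> L \<ge> 1 \<and> (\<forall>i\<ge>1. X i > 0) \<and> (\<forall>i\<ge>1. X (i + L) = X i)"

definition F :: "(nat \<Rightarrow> real) \<Rightarrow> nat \<Rightarrow> nat \<Rightarrow> real \<Rightarrow> real" where
  "F X L k c = (if c = 0 then (\<Sum>i=1..L. X i) / real L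
     else (let m = nat \<lceil>c * real (k * L)\<rceil> in S X (k * L) m powr (1 / real m)))"

definition Flim :: "(nat \<Rightarrow> real) \<Rightarrow> nat \<Rightarrow> real \<Rightarrow> real" where
  "Flim X L c = lim (\<lambda>k. F X L k c)"

definition P_GK :: "nat \<Rightarrow> real" where
  "P_GK k = log 2 (1 + 1 / (real k * (real k + 2)))"

text \<open>Number of entries equal to k in one period of X_d.\<close>
definition cntd :: "nat \<Rightarrow> nat \<Rightarrow> nat" where
  "cntd d k = nat \<lfloor>P_GK k * real (10 * d^2)\<rfloor>"

text \<open>Cumulative counts: block for value k occupies positions cum(k-1) <= j < cum k
  (0-indexed within a period).\<close>
definition cumd :: "nat \<Rightarrow> nat \<Rightarrow> nat" where
  "cumd d k = (\<Sum>t\<in>{2..k}. cntd d t)"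

definition Xd :: "nat \<Rightarrow> nat \<Rightarrow> real" where
  "Xd d i = (let j = (i - 1) mod (10 * d^2) in
     if \<exists>k\<in>{2..d}. cumd d (k - 1) \<le> j \<and> j < cumd d k
     then real (THE k. k \<in> {2..d} \<and> cumd d (k - 1) \<le> j \<and> j < cumd d k)
     else 1)"

end

theory Submission
  imports Defs
begin

lemma PGK_upper:
  assumes "k \<ge> 1"
  shows "P_GK k \<le> 2 / (real k * (real k + 2))"
proof -
  define x where "x = 1 / (real k * (real k + 2))"
  have x0: "x \<ge> 0" using assms by (simp add: x_def)
  have "ln (1 + x) \<le> x" using x0 by (rule ln_add_one_self_le_self)
  moreover have l2: "ln 2 \<ge> (1/2::real)" using ln2_ge_two_thirds by linarith
  moreover have "ln (1+x) \<ge> 0" using x0 by simp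
  ultimately have "ln (1+x) / ln 2 \<le> x / (1/2)"
    by (meson frac_le less_eq_real_def zero_less_divide_1_iff zero_less_numeral order_trans)
  thus ?thesis by (simp add: P_GK_def log_def x_def)
qed

lemma PGK_lower:
  assumes "k \<ge> 1"
  shows "P_GK k \<ge> 1 / (2 * (real k * (real k + 2)))"
proof -
  define x where "x = 1 / (real k * (real k + 2))"
  have x0: "x \<ge> 0" using assms by (simp add: x_def)
  have k1: "real k \<ge> 1" using assms by simp
  have "real k * (real k + 2) \<ge> 1 * 3" using k1 by (intro mult_mono) auto
  hence x1: "x \<le> 1/3" unfolding x_def by (simp add: divide_le_eq)
  have "x - x^2 \<le> ln (1 + x)" using x0 x1 by (intro ln_one_plus_pos_lower_bound) auto
  moreover have "x * x \<le> x * (1/2)" using x0 x1 by (intro mult_left_mono) auto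
  hence "x - x^2 \<ge> x / 2" by (simp add: power2_eq_square)
  ultimately have a: "ln (1+x) \<ge> x/2" by linarith
  have lp: "ln (1+x) \<ge> 0" using x0 by simp
  have "ln (1+x) * ln 2 \<le> ln (1+x) * 1" using lp ln_2_less_1 by (intro mult_left_mono) auto
  hence "ln (1+x) / ln 2 \<ge> ln (1+x)"
    by (simp add: le_divide_eq)
  moreover have e1: "P_GK k = ln (1+x) / ln 2" by (simp add: P_GK_def log_def x_def)
  moreover have e2: "1/(2*(real k*(real k+2))) = x/2" by (simp add: x_def)
  ultimately show ?thesis using a by linarith
qed

lemma tel1: "n \<ge> 1 \<Longrightarrow> (\<Sum>k\<in>{2..n}. 2 / (real k * (real k + 2))) \<le> 1 - 2 / (real n + 1)"
proof (induction n)
  case 0 then show ?case by simp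
next
  case (Suc n)
  show ?case
  proof (cases "n = 0")
    case True then show ?thesis by simp
  next
    case False
    then have IH: "(\<Sum>k\<in>{2..n}. 2 / (real k * (real k + 2))) \<le> 1 - 2 / (real n + 1)" using Suc by simp
    have e: "{2..Suc n} = insert (Suc n) {2..n}" using False by auto
    have "2 / (real (Suc n) * (real (Suc n) + 2)) \<le> 2 / ((real n + 1) * (real n + 2))"
      by (intro divide_left_mono mult_mono) auto
    also have "\<dots> = 2 / (real n + 1) - 2 / (real (Suc n) + 1)"
      by (simp add: field_simps)
    finally have "2 / (real (Suc n) * (real (Suc n) + 2)) \<le> 2 / (real n + 1) - 2 / (real (Suc n) + 1)" .
    then show ?thesis using IH by (simp add: e)
  qed
qed

lemma tel2: "n \<ge> 1 \<Longrightarrow> (\<Sum>k\<in>{2..n}. 1 / (real k + 2)) \<ge> ln (real n + 3) - ln 4"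
proof (induction n)
  case 0 then show ?case by simp
next
  case (Suc n)
  show ?case
  proof (cases "n = 0")
    case True then show ?thesis by simp
  next
    case False
    then have IH: "(\<Sum>k\<in>{2..n}. 1 / (real k + 2)) \<ge> ln (real n + 3) - ln 4" using Suc by simp
    have e: "{2..Suc n} = insert (Suc n) {2..n}" using False by auto
    have "(real n + 3) * (1 + 1 / (real n + 3)) = real n + 4"
      by (simp add: field_simps)
    hence "ln (real n + 4) = ln ((real n + 3) * (1 + 1 / (real n + 3)))"
      by simp
    also have "\<dots> = ln (real n + 3) + ln (1 + 1 / (real n + 3))"
      by (rule ln_mult_pos) (auto simp: add_pos_pos)
    also have "ln (1 + 1 / (real n + 3)) \<le> 1 / (real n + 3)"
      by (rule ln_add_one_self_le_self) simp
    finally have "ln (real n + 4) \<le> ln (real n + 3) + 1 / (real n + 3)" by simp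
    then show ?thesis using IH by (simp add: e add.commute add.left_commute)
  qed
qed

lemma PGK_nonneg: "k \<ge> 1 \<Longrightarrow> P_GK k \<ge> 0"
proof -
  assume k: "k \<ge> 1"
  have "0 \<le> 1 / (2 * (real k * (real k + 2)))" by simp
  thus ?thesis using PGK_lower[OF k] by linarith
qed

lemma cntd_le: "k \<ge> 1 \<Longrightarrow> real (cntd d k) \<le> P_GK k * real (10*d^2)"
proof -
  assume k: "k \<ge> 1"
  have "P_GK k * real (10*d^2) \<ge> 0" using PGK_nonneg[OF k] by simp
  thus ?thesis unfolding cntd_def by linarith
qed

lemma cntd_ge: "real (cntd d k) \<ge> P_GK k * real (10*d^2) - 1"
  unfolding cntd_def by linarith

lemma cumd_le: "cumd d d \<le> 10*d^2"
proof (cases "d \<ge> 1")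
  case False then show ?thesis by (simp add: cumd_def)
next
  case True
  have "real (cumd d d) = (\<Sum>k\<in>{2..d}. real (cntd d k))" by (simp add: cumd_def)
  also have "\<dots> \<le> (\<Sum>k\<in>{2..d}. 2 / (real k * (real k + 2)) * real (10*d^2))"
  proof (rule sum_mono)
    fix k assume "k \<in> {2..d}"
    hence k: "k \<ge> 1" by auto
    show "real (cntd d k) \<le> 2 / (real k * (real k + 2)) * real (10*d^2)"
      using cntd_le[OF k, of d] PGK_upper[OF k]
      by (meson mult_right_mono of_nat_0_le_iff order_trans)
  qed
  also have "\<dots> = (\<Sum>k\<in>{2..d}. 2 / (real k * (real k + 2))) * real (10*d^2)"
    by (simp add: sum_distrib_right)
  also have "\<dots> \<le> 1 * real (10*d^2)"
  proof (rule mult_right_mono)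
    have "2 / (real d + 1) \<ge> 0" by simp
    thus "(\<Sum>k\<in>{2..d}. 2 / (real k * (real k + 2))) \<le> 1" using tel1[OF True] by linarith
  qed simp
  finally have "real (cumd d d) \<le> real (10*d^2)" by simp
  thus ?thesis by (simp only: of_nat_le_iff)
qed

lemma cumd_mono: "a \<le> b \<Longrightarrow> cumd d a \<le> cumd d b"
  unfolding cumd_def by (intro sum_mono2) auto

lemma blk_uniq:
  assumes "cumd d (k-1) \<le> j" "j < cumd d k" "cumd d (k'-1) \<le> j" "j < cumd d k'"
  shows "k = k'"
proof (rule ccontr)
  assume "k \<noteq> k'"
  then consider "k < k'" | "k' < k" by linarith
  then show False
  proof cases
    case 1
    hence "cumd d k \<le> cumd d (k'-1)" by (intro cumd_mono) simp
    thus False using assms by linarith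
  next
    case 2
    hence "cumd d k' \<le> cumd d (k-1)" by (intro cumd_mono) simp
    thus False using assms by linarith
  qed
qed

lemma the_blk:
  assumes "k \<in> {2..d}" "cumd d (k-1) \<le> j" "j < cumd d k"
  shows "(THE k. k \<in> {2..d} \<and> cumd d (k - 1) \<le> j \<and> j < cumd d k) = k"
  using assms by (intro the_equality) (auto intro: blk_uniq)

lemma Xd_ge1: "Xd d i \<ge> 1"
proof -
  define j where "j = (i - 1) mod (10 * d^2)"
  show ?thesis
  proof (cases "\<exists>k\<in>{2..d}. cumd d (k - 1) \<le> j \<and> j < cumd d k")
    case True
    then obtain k where k: "k \<in> {2..d}" "cumd d (k - 1) \<le> j" "j < cumd d k" by blast
    have "Xd d i = real k" unfolding Xd_def Let_def j_def[symmetric]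
      using True the_blk[OF k] by simp
    thus ?thesis using k by simp
  next
    case False
    thus ?thesis unfolding Xd_def Let_def j_def[symmetric] by (simp only: if_not_P[OF False]) simp
  qed
qed

lemma Xd_blk:
  assumes "k \<in> {2..d}" "cumd d (k-1) \<le> j" "j < cumd d k"
  shows "Xd d (Suc j) = real k"
proof -
  have "cumd d k \<le> cumd d d" using assms by (intro cumd_mono) auto
  hence jl: "j < 10*d^2" using cumd_le[of d] assms by linarith
  hence jm: "(Suc j - 1) mod (10*d^2) = j" by simp
  show ?thesis unfolding Xd_def Let_def jm using assms the_blk[OF assms] by auto
qed

lemma blocksum:
  "1 \<le> n \<Longrightarrow> n \<le> d \<Longrightarrow> (\<Sum>j<cumd d n. Xd d (Suc j)) = (\<Sum>k=2..n. real k * real (cntd d k))"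
proof (induction n)
  case 0 then show ?case by simp
next
  case (Suc n)
  show ?case
  proof (cases "n = 0")
    case True then show ?thesis by (simp add: cumd_def)
  next
    case False
    have IH: "(\<Sum>j<cumd d n. Xd d (Suc j)) = (\<Sum>k=2..n. real k * real (cntd d k))"
      using Suc False by simp
    have e: "{2..Suc n} = insert (Suc n) {2..n}" using False by auto
    have c: "cumd d (Suc n) = cumd d n + cntd d (Suc n)" unfolding cumd_def e by simp
    have u: "{..<cumd d (Suc n)} = {..<cumd d n} \<union> {cumd d n..<cumd d n + cntd d (Suc n)}"
      unfolding c by auto
    have "(\<Sum>j<cumd d (Suc n). Xd d (Suc j)) = (\<Sum>j<cumd d n. Xd d (Suc j))
        + (\<Sum>j\<in>{cumd d n..<cumd d n + cntd d (Suc n)}. Xd d (Suc j))"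
      unfolding u by (rule sum.union_disjoint) auto
    also have "(\<Sum>j\<in>{cumd d n..<cumd d n + cntd d (Suc n)}. Xd d (Suc j))
        = (\<Sum>j\<in>{cumd d n..<cumd d n + cntd d (Suc n)}. real (Suc n))"
    proof (rule sum.cong)
      fix j assume j: "j \<in> {cumd d n..<cumd d n + cntd d (Suc n)}"
      show "Xd d (Suc j) = real (Suc n)"
        using Suc.prems False j c by (intro Xd_blk) auto
    qed simp
    also have "\<dots> = real (cntd d (Suc n)) * real (Suc n)" by simp
    finally show ?thesis using IH e by simp
  qed
qed

lemma shift_sum: "(\<Sum>i=1..n. f i) = (\<Sum>j<n. f (Suc j) :: real)"
  by (induct n) (auto simp: atLeastAtMostSuc_conv)

lemma total_lower:
  assumes "d \<ge> 1"
  shows "(\<Sum>i=1..10*d^2. Xd d i) \<ge> (\<Sum>k=2..d. real k * real (cntd d k))"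
proof -
  have "(\<Sum>k=2..d. real k * real (cntd d k)) = (\<Sum>j<cumd d d. Xd d (Suc j))"
    using blocksum[OF assms order_refl] by simp
  also have "\<dots> \<le> (\<Sum>j<10*d^2. Xd d (Suc j))"
    using cumd_le[of d] by (intro sum_mono2) (auto intro: order_trans[OF zero_le_one Xd_ge1])
  finally show ?thesis by (simp only: shift_sum[where f="Xd d" and n="10*d^2"])
qed

lemma aux: "(a::real) > 0 \<Longrightarrow> b > 0 \<Longrightarrow> a * (1 / (2 * (a * b)) * L) = L * (1 / b) / 2"
  by (simp add: field_simps)

lemma mean_bound:
  assumes d: "d \<ge> 1"
  shows "(\<Sum>i=1..10*d^2. Xd d i) / real (10*d^2) \<ge> (ln (real d + 3) - ln 4) / 2 - 1/10"
proof -
  define L where "L = real (10*d^2)"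
  have Lpos: "L > 0" using d by (simp add: L_def)
  have tm: "real k * real (cntd d k) \<ge> L * (1 / (real k + 2)) / 2 - real k" if k: "k \<in> {2..d}" for k
  proof -
    have k1: "k \<ge> 1" using k by auto
    have "real k * real (cntd d k) \<ge> real k * (P_GK k * L - 1)"
      using cntd_ge[where d=d and k=k] by (intro mult_left_mono) (auto simp: L_def)
    moreover have "real k * (P_GK k * L) \<ge> real k * (1 / (2 * (real k * (real k + 2))) * L)"
      using PGK_lower[OF k1] Lpos by (intro mult_left_mono mult_right_mono) auto
    moreover have "real k * (1 / (2 * (real k * (real k + 2))) * L) = L * (1 / (real k + 2)) / 2"
    proof -
      have kp: "real k > 0" using k1 by simp
      have kq: "real k + 2 > 0" using k1 by simp
      show ?thesis using kp kq by (rule aux)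
    qed
    ultimately show ?thesis by (simp add: algebra_simps)
  qed
  have sk: "(\<Sum>k=2..d. real k) \<le> real d * real d"
  proof -
    have "(\<Sum>k=2..d. real k) \<le> (\<Sum>k=2..d. real d)" by (intro sum_mono) auto
    also have "\<dots> = real (d - 1) * real d" by simp
    also have "\<dots> \<le> real d * real d" by (intro mult_right_mono) auto
    finally show ?thesis .
  qed
  have "(\<Sum>i=1..10*d^2. Xd d i) \<ge> (\<Sum>k=2..d. L * (1 / (real k + 2)) / 2 - real k)"
    using total_lower[OF d] sum_mono[of "{2..d}" "\<lambda>k. L * (1 / (real k + 2)) / 2 - real k" "\<lambda>k. real k * real (cntd d k)"] tm
    by (meson order_trans)
  also have "(\<Sum>k=2..d. L * (1 / (real k + 2)) / 2 - real k)
     = L / 2 * (\<Sum>k=2..d. 1 / (real k + 2)) - (\<Sum>k=2..d. real k)"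
    by (simp add: sum_subtractf sum_distrib_left sum_divide_distrib) (intro sum.cong; simp add: mult.commute)
  also have "\<dots> \<ge> L / 2 * (ln (real d + 3) - ln 4) - real d * real d"
    using tel2[OF d] sk Lpos by (intro diff_mono mult_left_mono) auto
  finally have A: "(\<Sum>i=1..10*d^2. Xd d i) \<ge> L / 2 * (ln (real d + 3) - ln 4) - real d * real d" .
  have "L / 2 * (ln (real d + 3) - ln 4) - real d * real d = L * ((ln (real d + 3) - ln 4) / 2 - 1/10)"
    by (simp add: L_def field_simps power2_eq_square)
  with A have "(\<Sum>i=1..10*d^2. Xd d i) \<ge> L * ((ln (real d + 3) - ln 4) / 2 - 1/10)" by simp
  thus ?thesis using Lpos unfolding L_def[symmetric] by (simp add: le_divide_eq mult.commute)
qed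

lemma Xd_periodic: "d \<ge> 1 \<Longrightarrow> periodic_pos (Xd d) (10*d^2)"
proof -
  assume d: "d \<ge> 1"
  have "10*d^2 \<ge> 1" using d by (simp add: Suc_le_eq)
  moreover have "\<forall>i\<ge>1. Xd d i > 0"
  proof (intro allI impI)
    fix i :: nat show "Xd d i > 0" using Xd_ge1[of d i] by linarith
  qed
  moreover have "\<forall>i\<ge>1. Xd d (i + 10*d^2) = Xd d i"
  proof (intro allI impI)
    fix i :: nat assume i: "i \<ge> 1"
    have "i + 10*d^2 - 1 = (i - 1) + 10*d^2" using i by simp
    hence eq: "(i + 10*d^2 - 1) mod (10*d^2) = (i - 1) mod (10*d^2)" by simp
    show "Xd d (i + 10*d^2) = Xd d i" by (simp only: Xd_def Let_def eq)
  qed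
  ultimately show ?thesis unfolding periodic_pos_def by blast
qed

theorem lemma5p4:
  assumes "\<forall>X L. periodic_pos X L \<longrightarrow>
             (\<forall>c\<in>{0..1}. convergent (\<lambda>k. F X L k c)) \<and>
             continuous_on {0..1} (Flim X L)"
  shows "\<forall>M::real. \<exists>c::real. \<exists>d::nat. 0 < c \<and> c \<le> 1 \<and> d > 1 \<and>
           Flim (Xd d) (10 * d^2) c > M"
proof
  fix M :: real
  define d where "d = max 2 (nat \<lceil>exp (2 * \<bar>M\<bar> + 3)\<rceil>)"
  have d2: "d > 1" and d1: "d \<ge> 1" by (auto simp: d_def)
  have "real d \<ge> exp (2 * \<bar>M\<bar> + 3)" unfolding d_def by linarith
  hence "exp (2 * \<bar>M\<bar> + 3) \<le> real d + 3" by linarith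
  hence "ln (exp (2 * \<bar>M\<bar> + 3)) \<le> ln (real d + 3)"
    using ln_le_cancel_iff[of "exp (2 * \<bar>M\<bar> + 3)" "real d + 3"] by simp
  hence "ln (real d + 3) \<ge> 2 * \<bar>M\<bar> + 3" by simp
  moreover have "ln (4::real) < 2"
  proof -
    have "ln (2 * 2::real) = ln 2 + ln 2" by (rule ln_mult_pos) auto
    hence "ln (4::real) = ln 2 + ln 2" by simp
    thus ?thesis using ln_2_less_1 by linarith
  qed
  moreover have "M \<le> \<bar>M\<bar>" by simp
  ultimately have mM: "(ln (real d + 3) - ln 4) / 2 - 1/10 > M" by (simp add: field_simps)
  define L where "L = 10 * d^2"
  define f where "f = Flim (Xd d) L"
  have f0: "f 0 = (\<Sum>i=1..L. Xd d i) / real L"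
    unfolding f_def Flim_def F_def by simp
  have f0M: "f 0 > M" using mean_bound[OF d1] mM unfolding f0 L_def by linarith
  have cont: "continuous_on {0..1} f"
    using assms Xd_periodic[OF d1] unfolding f_def L_def by blast
  have z: "(0::real) \<in> {0..1}" by simp
  have all: "\<forall>e>0. \<exists>\<delta>>0. \<forall>x'\<in>{0..1}. dist x' 0 < \<delta> \<longrightarrow> dist (f x') (f 0) < e"
    using cont z unfolding continuous_on_iff by blast
  have "f 0 - M > 0" using f0M by simp
  then obtain \<delta> where dp: "\<delta> > 0" and dd: "\<forall>x'\<in>{0..1}. dist x' 0 < \<delta> \<longrightarrow> dist (f x') (f 0) < f 0 - M"
    using all by blast
  define c where "c = min 1 (\<delta> / 2)"
  have c: "0 < c" "c \<le> 1" using dp by (auto simp: c_def)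
  have "dist c 0 < \<delta>" using dp c by (auto simp: c_def dist_real_def)
  hence "dist (f c) (f 0) < f 0 - M" using dd c by auto
  hence "f c > M" by (auto simp: dist_real_def)
  thus "\<exists>c::real. \<exists>d::nat. 0 < c \<and> c \<le> 1 \<and> d > 1 \<and> Flim (Xd d) (10 * d^2) c > M"
    using c d2 unfolding f_def L_def by blast
qed

end
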